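(* Let $k\ge 1$ and let $\mathbf H_k=(h_{i,j})_{1\le i,j\le k}$ be a complex lower Hessenberg matrix, i.e. $h_{i,j}=0$ whenever $j-i>1$. Put $c_{i,j}=h_{i,j}$ if $j\neq i+1$ and $c_{i,i+1}=-h_{i,i+1}$. For $m\in\{0,1,\dots,2^{k-1}-1\}$ and $1\le j\le k$ let $\sigma_{k,j}(m)=j-\zeta_{k,j}(\tau_k(m))$, where $\tau_k$ and $\zeta_{k,j}$ are as defined in the context. Then $$\det(\mathbf H_k)=\sum_{m=0}^{2^{k-1}-1}\ \prod_{j=1}^{k} c_{j,\sigma_{k,j}(m)} .$$
   Context: $\mathfrak R_k$ denotes the set of arrays $r=(r_1,\dots,r_k)$ with $r_i\in\{0,1\}$ for $1\le i\le k-1$ and $r_k=1$. For $m\in\{0,\dots,2^{k-1}-1\}$, $\tau_k(m)=(\lfloor m/2^{k-2}\rfloor \bmod 2,\ \lfloor m/2^{k-3}\rfloor \bmod 2,\dots,\lfloor m/2^{0}\rfloor \bmod 2,\ 1)\in\mathfrak R_k$ (for $k=1$, $\tau_1(0)=(1)$). For $r\in\mathfrak R_k$ and $1\le i\le k$: $\zeta_{k,i}(r)=-1$ if $r_i=0$; if $r_i=1$ and there is an index $l<i$ with $r_l=1$, then $\zeta_{k,i}(r)=i-l-1$ where $l$ is the largest such index (i.e. $\zeta_{k,i}(r)$ is the number of consecutive zeros immediately preceding $r_i$); if $r_i=1$ and $r_l=0$ for all $l<i$, then $\zeta_{k,i}(r)=i-1$. Thus $\sigma_{k,j}(m)=j+1$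 exactly when the $j$-th component of $\tau_k(m)$ is $0$, in which case the factor is $c_{j,j+1}=-h_{j,j+1}$. *)

theory Defs
  imports "Jordan_Normal_Form.Determinant"
begin

text \<open>Arrays r in R_k are represented 1-based as functions nat => nat (only r 1 .. r k matter).\<close>

definition tau :: "nat \<Rightarrow> nat \<Rightarrow> (nat \<Rightarrow> nat)" where
  "tau k m = (\<lambda>i. if i = k then 1 else (m div 2 ^ (k - 1 - i)) mod 2)"

definition zeta :: "nat \<Rightarrow> nat \<Rightarrow> (nat \<Rightarrow> nat) \<Rightarrow> int" where
  "zeta k i r =
     (if r i = 0 then -1
      else if (\<exists>l. 1 \<le> l \<and> l < i \<and> r l = 1)
        then int i - int (GREATEST l. 1 \<le> l \<and> l < i \<and> r l = 1) - 1
      else int i - 1)"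

definition sigma :: "nat \<Rightarrow> nat \<Rightarrow> nat \<Rightarrow> nat" where
  "sigma k j m = nat (int j - zeta k j (tau k m))"

definition hent :: "complex mat \<Rightarrow> nat \<Rightarrow> nat \<Rightarrow> complex" where
  "hent H i j = H $$ (i - 1, j - 1)"

definition cent :: "complex mat \<Rightarrow> nat \<Rightarrow> nat \<Rightarrow> complex" where
  "cent H i j = (if j = i + 1 then - hent H i j else hent H i j)"

end

theory Submission
  imports Defs
begin

definition Dt :: "nat \<Rightarrow> (nat \<Rightarrow> nat \<Rightarrow> complex) \<Rightarrow> complex" where
  "Dt n A = det (mat n n (\<lambda>(i,j). A (Suc i) (Suc j)))"

definition hess :: "nat \<Rightarrow> (nat \<Rightarrow> nat \<Rightarrow> complex) \<Rightarrow> bool" where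
  "hess n A = (\<forall>i\<in>{1..n}. \<forall>j\<in>{1..n}. j > i + 1 \<longrightarrow> A i j = 0)"

lemma Dt_rec:
  assumes h: "hess (Suc n) A" and n: "n \<ge> 1"
  shows "Dt (Suc n) A = A 1 1 * Dt n (\<lambda>i j. A (Suc i) (Suc j))
     - A 1 2 * Dt n (\<lambda>i j. A (Suc i) (if j = 1 then 1 else Suc j))"
proof -
  define M where "M = mat (Suc n) (Suc n) (\<lambda>(i,j). A (Suc i) (Suc j))"
  have MC: "M \<in> carrier_mat (Suc n) (Suc n)" unfolding M_def by auto
  have "det M = (\<Sum>j<Suc n. M $$ (0,j) * cofactor M 0 j)"
    by (rule laplace_expansion_row[OF MC], simp)
  also have "\<dots> = (\<Sum>j\<in>{0,1}. M $$ (0,j) * cofactor M 0 j)"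
  proof (rule sum.mono_neutral_right)
    show "\<forall>j\<in>{..<Suc n} - {0, 1}. M $$ (0, j) * cofactor M 0 j = 0"
    proof
      fix j assume "j \<in> {..<Suc n} - {0, 1}"
      then have "j < Suc n" "j \<ge> 2" by auto
      then have "A 1 (Suc j) = 0" using h unfolding hess_def by auto
      then show "M $$ (0, j) * cofactor M 0 j = 0" unfolding M_def using \<open>j < Suc n\<close> by simp
    qed
  qed (use n in auto)
  also have "\<dots> = M $$ (0,0) * cofactor M 0 0 + M $$ (0,1) * cofactor M 0 1" by simp
  finally have dM: "det M = M $$ (0,0) * cofactor M 0 0 + M $$ (0,1) * cofactor M 0 1" .
  have d0: "mat_delete M 0 0 = mat n n (\<lambda>(i,j). (\<lambda>i j. A (Suc i) (Suc j)) (Suc i) (Suc j))"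
    unfolding M_def mat_delete_def by (rule eq_matI) auto
  have d1: "mat_delete M 0 1 = mat n n (\<lambda>(i,j). (\<lambda>i j. A (Suc i) (if j = 1 then 1 else Suc j)) (Suc i) (Suc j))"
    unfolding M_def mat_delete_def by (rule eq_matI) auto
  show ?thesis using n dM unfolding Dt_def cofactor_def M_def[symmetric] d0[symmetric] d1[symmetric]
    by (simp add: M_def numeral_2_eq_2)
qed

lemma Dt_one: "Dt 1 A = A 1 1"
proof -
  define M where "M = mat 1 1 (\<lambda>(i,j). A (Suc i) (Suc j))"
  have MC: "M \<in> carrier_mat 1 1" unfolding M_def by auto
  have "det M = (\<Sum>j<1. M $$ (0,j) * cofactor M 0 j)"
    by (rule laplace_expansion_row[OF MC], simp)
  also have "\<dots> = M $$ (0,0) * cofactor M 0 0" by simp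
  also have "cofactor M 0 0 = 1" unfolding cofactor_def
    using mat_delete_carrier[OF MC, of 0 0] by simp
  finally show ?thesis unfolding Dt_def M_def[symmetric] by (simp add: M_def)
qed

fun prv :: "(nat \<Rightarrow> nat) \<Rightarrow> nat \<Rightarrow> nat" where
  "prv r 0 = 0"
| "prv r (Suc i) = (if 1 \<le> i \<and> r i = 1 then i else prv r i)"

lemma prv_greatest:
  "prv r i = (if \<exists>l. 1 \<le> l \<and> l < i \<and> r l = 1 then GREATEST l. 1 \<le> l \<and> l < i \<and> r l = 1 else 0)"
proof (induction i)
  case 0
  then show ?case by simp
next
  case (Suc i)
  show ?case
  proof (cases "1 \<le> i \<and> r i = 1")
    case True
    have "(GREATEST l. 1 \<le> l \<and> l < Suc i \<and> r l = 1) = i"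
      by (rule Greatest_equality) (use True in auto)
    then show ?thesis using True by auto
  next
    case False
    have e: "(\<lambda>l. 1 \<le> l \<and> l < Suc i \<and> r l = 1) = (\<lambda>l. 1 \<le> l \<and> l < i \<and> r l = 1)"
      using False by (auto simp: less_Suc_eq fun_eq_iff)
    show ?thesis using False Suc.IH by (simp only: e prv.simps if_False) 
  qed
qed

lemma zeta_prv: "zeta k i r = (if r i = 0 then -1 else int i - int (prv r i) - 1)"
  unfolding zeta_def prv_greatest by auto

lemma sigma_prv: "sigma k j m = (if tau k m j = 0 then j + 1 else prv (tau k m) j + 1)"
  unfolding sigma_def zeta_prv by auto

lemma prv_shift:
  assumes rs: "\<And>i. 1 \<le> i \<Longrightarrow> i < K \<Longrightarrow> r (Suc i) = r' i" and r1: "r 1 = b" and b: "b \<le> 1"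
  shows "1 \<le> i \<Longrightarrow> i \<le> K \<Longrightarrow> prv r (Suc i) = (if prv r' i = 0 then b else prv r' i + 1)"
proof (induction i rule: dec_induct)
  case base
  then show ?case using r1 b by (cases b) auto
next
  case (step i)
  then show ?case using rs[of i] by auto
qed

lemma tau_first:
  assumes n: "n \<ge> 1" and m': "m' < 2 ^ (n - 1)" and b: "b \<le> (1::nat)"
  shows "tau (Suc n) (b * 2 ^ (n - 1) + m') 1 = b"
proof -
  have "(b * 2 ^ (n - 1) + m') div 2 ^ (n - 1) = b" using m' by simp
  then show ?thesis using n b unfolding tau_def by auto
qed

lemma tau_shift:
  assumes n: "n \<ge> 1" and m': "m' < 2 ^ (n - 1)" and i: "1 \<le> i" "i \<le> n"
  shows "tau (Suc n) (b * 2 ^ (n - 1) + m') (Suc i) = tau n m' i"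
proof (cases "i = n")
  case True
  then show ?thesis unfolding tau_def by simp
next
  case False
  define e where "e = n - 1 - i"
  have ne: "n - 1 = e + i" using i False unfolding e_def by auto
  have 1: "Suc n - 1 - Suc i = e" "n - 1 - i = e" unfolding e_def by auto
  have "(b * 2 ^ (n - 1) + m') div 2 ^ e = b * 2 ^ i + m' div 2 ^ e"
  proof -
    have "b * 2 ^ (n - 1) + m' = m' + (b * 2 ^ i) * 2 ^ e" unfolding ne power_add by simp
    then show ?thesis by (simp only: div_mult_self1[of "2 ^ e"]) simp
  qed
  moreover obtain j where j: "i = Suc j" using i by (cases i) auto
  moreover have "b * 2 ^ i + m' div 2 ^ e = m' div 2 ^ e + (b * 2 ^ j) * 2" unfolding j by simp
  ultimately have "(b * 2 ^ (n - 1) + m') div 2 ^ e mod 2 = m' div 2 ^ e mod 2"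
    by (simp only: mod_mult_self1)
  then show ?thesis using False i unfolding tau_def 1 by simp
qed


lemma sigma_first:
  assumes n: "n \<ge> 1" and m': "m' < 2 ^ (n - 1)" and b: "b \<le> (1::nat)"
  shows "sigma (Suc n) 1 (b * 2 ^ (n - 1) + m') = (if b = 0 then 2 else 1)"
  using tau_first[OF n m' b] unfolding sigma_prv by simp

lemma sigma_shift:
  assumes n: "n \<ge> 1" and m': "m' < 2 ^ (n - 1)" and b: "b \<le> (1::nat)"
    and i: "1 \<le> i" "i \<le> n"
  shows "sigma (Suc n) (Suc i) (b * 2 ^ (n - 1) + m') =
    (if sigma n i m' = 1 \<and> b = 0 then 1 else sigma n i m' + 1)"
proof -
  define r where "r = tau (Suc n) (b * 2 ^ (n - 1) + m')"
  define r' where "r' = tau n m'"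
  have rs: "\<And>l. 1 \<le> l \<Longrightarrow> l < n \<Longrightarrow> r (Suc l) = r' l"
    unfolding r_def r'_def by (rule tau_shift[OF n m']) auto
  have r1: "r 1 = b" unfolding r_def by (rule tau_first[OF n m' b])
  have ri: "r (Suc i) = r' i" unfolding r_def r'_def by (rule tau_shift[OF n m' i])
  have p: "prv r (Suc i) = (if prv r' i = 0 then b else prv r' i + 1)"
    by (rule prv_shift[OF rs r1 b i]) auto
  show ?thesis
    unfolding sigma_prv r_def[symmetric] r'_def[symmetric] ri p using i b by auto
qed

definition Cf :: "(nat \<Rightarrow> nat \<Rightarrow> complex) \<Rightarrow> nat \<Rightarrow> nat \<Rightarrow> complex" where
  "Cf A i j = (if j = i + 1 then - A i j else A i j)"

definition Sf :: "nat \<Rightarrow> (nat \<Rightarrow> nat \<Rightarrow> complex) \<Rightarrow> complex" where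
  "Sf n A = (\<Sum>m<2 ^ (n - 1). \<Prod>j=1..n. Cf A j (sigma n j m))"

lemma sum_split_add: "(\<Sum>m<a+b. f m) = (\<Sum>m<a. f m) + (\<Sum>m<b. f (a + m::nat))"
  by (induction b) (auto simp: add.assoc)

lemma Sf_one: "Sf 1 A = A 1 1"
  unfolding Sf_def Cf_def sigma_prv tau_def by simp

lemma Sf_rec:
  assumes n: "n \<ge> 1"
  shows "Sf (Suc n) A = A 1 1 * Sf n (\<lambda>i j. A (Suc i) (Suc j))
     - A 1 2 * Sf n (\<lambda>i j. A (Suc i) (if j = 1 then 1 else Suc j))"
proof -
  define N where "N = (2::nat) ^ (n - 1)"
  have N2: "(2::nat) ^ (Suc n - 1) = N + N" unfolding N_def using n
    by (cases n) auto
  define g where "g m = (\<Prod>j=1..Suc n. Cf A j (sigma (Suc n) j m))" for m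
  have split: "\<And>m. g m = Cf A 1 (sigma (Suc n) 1 m) * (\<Prod>i=1..n. Cf A (Suc i) (sigma (Suc n) (Suc i) m))"
    unfolding g_def by (subst prod.atLeast_Suc_atMost) (simp_all del: prod.cl_ivl_Suc add: prod.shift_bounds_cl_Suc_ivl)
  have g0: "g m = - A 1 2 * (\<Prod>i=1..n. Cf (\<lambda>i j. A (Suc i) (if j = 1 then 1 else Suc j)) i (sigma n i m))"
    if m: "m < N" for m
  proof -
    have mm: "m = 0 * 2 ^ (n - 1) + m" by simp
    have "Cf A 1 (sigma (Suc n) 1 m) = - A 1 2"
      using sigma_first[OF n m[unfolded N_def], of 0] by (simp add: Cf_def)
    moreover have cs: "Cf A (Suc i) (sigma (Suc n) (Suc i) m) =
        Cf (\<lambda>i j. A (Suc i) (if j = 1 then 1 else Suc j)) i (sigma n i m)"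
      if i: "i \<in> {1..n}" for i
      using sigma_shift[OF n m[unfolded N_def], of 0 i] i by (auto simp: Cf_def)
    ultimately show ?thesis unfolding split using prod.cong[OF refl cs] by simp
  qed
  have g1: "g (N + m) = A 1 1 * (\<Prod>i=1..n. Cf (\<lambda>i j. A (Suc i) (Suc j)) i (sigma n i m))"
    if m: "m < N" for m
  proof -
    have mm: "N + m = 1 * 2 ^ (n - 1) + m" unfolding N_def by simp
    have "Cf A 1 (sigma (Suc n) 1 (N + m)) = A 1 1"
      using sigma_first[OF n m[unfolded N_def], of 1] unfolding mm by (simp add: Cf_def)
    moreover have cs: "Cf A (Suc i) (sigma (Suc n) (Suc i) (N + m)) =
        Cf (\<lambda>i j. A (Suc i) (Suc j)) i (sigma n i m)"
      if i: "i \<in> {1..n}" for i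
      using sigma_shift[OF n m[unfolded N_def], of 1 i] i unfolding mm by (auto simp: Cf_def)
    ultimately show ?thesis unfolding split using prod.cong[OF refl cs] by simp
  qed
  have "Sf (Suc n) A = (\<Sum>m<N. g m) + (\<Sum>m<N. g (N + m))"
    unfolding Sf_def N2 g_def[symmetric] by (rule sum_split_add)
  also have "\<dots> = (\<Sum>m<N. - A 1 2 * (\<Prod>i=1..n. Cf (\<lambda>i j. A (Suc i) (if j = 1 then 1 else Suc j)) i (sigma n i m)))
     + (\<Sum>m<N. A 1 1 * (\<Prod>i=1..n. Cf (\<lambda>i j. A (Suc i) (Suc j)) i (sigma n i m)))"
    using g0 g1 by simp
  also have "\<dots> = A 1 1 * Sf n (\<lambda>i j. A (Suc i) (Suc j))
     - A 1 2 * Sf n (\<lambda>i j. A (Suc i) (if j = 1 then 1 else Suc j))"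
    unfolding Sf_def N_def[symmetric] sum_distrib_left[symmetric] by simp
  finally show ?thesis .
qed

lemma main:
  assumes "n \<ge> 1" "hess n A"
  shows "Dt n A = Sf n A"
  using assms
proof (induction n arbitrary: A rule: dec_induct)
  case base
  then show ?case using Dt_one[of A] Sf_one[of A] by simp
next
  case (step n)
  have h1: "hess n (\<lambda>i j. A (Suc i) (Suc j))"
    using step.prems unfolding hess_def by auto
  have h2: "hess n (\<lambda>i j. A (Suc i) (if j = 1 then 1 else Suc j))"
    using step.prems unfolding hess_def by auto
  show ?case
    using Dt_rec[OF step.prems step.hyps(1)] Sf_rec[OF step.hyps(1)] step.IH[OF h1] step.IH[OF h2]
    by simp
qed

theorem theorem1:
  fixes k :: nat and H :: "complex mat"
  assumes "k \<ge> 1"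
    and "H \<in> carrier_mat k k"
    and "\<forall>i\<in>{1..k}. \<forall>j\<in>{1..k}. int j - int i > 1 \<longrightarrow> hent H i j = 0"
  shows "det H = (\<Sum>m<2 ^ (k - 1). \<Prod>j=1..k. cent H j (sigma k j m))"
proof -
  have hs: "hess k (hent H)" using assms(3) unfolding hess_def by auto
  have "mat k k (\<lambda>(i,j). hent H (Suc i) (Suc j)) = H"
    using assms(2) unfolding hent_def by (intro eq_matI) auto
  then have "det H = Dt k (hent H)" unfolding Dt_def by simp
  also have "\<dots> = Sf k (hent H)" by (rule main[OF assms(1) hs])
  also have "cent H = Cf (hent H)" unfolding cent_def Cf_def by (intro ext) simp
  then have "Sf k (hent H) = (\<Sum>m<2 ^ (k - 1). \<Prod>j=1..k. cent H j (sigma k j m))"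
    unfolding Sf_def by simp
  finally show ?thesis .
qed

end
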